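(* Let $E$, $(\cdot\,\cdot)$, $|\cdot|$, $v$, and $f$ be as in the continuous-solution construction below, and assume in addition that $v$ is a $C^\infty$-diffeomorphism. Define $r:\mathbb{R}\to\mathbb{R}$ by $v''=r\,v'$ and $s:E\times E\to E$ by $s(a,b)=r\big((ab)/|b|\big)|b|\,b$ for $b\ne0$, $s(a,0)=0$. Then $s(a,\lambda b)=\lambda^2 s(a,b)$ for all $\lambda\in\mathbb{R}$, $a,b\in E$, and every $g\in\mathrm{Geo}\,f$ is twice differentiable and satisfies $g''(t)+s(g(t),g'(t))=0$ on its domain.
   Context: $E$ is a real finite-dimensional inner product space with inner product $(a,b)\mapsto(ab)$ and norm $|\cdot|$; $v:\mathbb{R}\to\mathbb{R}$ is an odd homeomorphism. For $a\ne b$, $e=(a-b)/|a-b|$ and $v_{ab}(c)=c+(v((ce))-(ce))e$ (a bijection of $E$); $f:E\times E\times[0,1]\to E$ is $f(a,b,\gamma)=v_{ab}^{-1}((1-\gamma)v_{ab}(a)+\gamma v_{ab}(b))$ for $a\ne b$, $f(a,a,\gamma)=a$. $\mathrm{Geo}\,f$ is the set of maps $g:I\to E$ ($I\subset\mathbb{R}$ an open interval) such that for every $\tau\in I$ there exist $\alpha,\beta\in I$ with $\alpha<\tau<\beta$ and $g((1-\gamma)\alpha+\gamma\beta)=f(g(\alpha),g(\beta),\gamma)$ for all $\gamma\in[0,1]$. *)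

theory Defs
  imports "HOL-Analysis.Analysis"
begin

definition smooth_real :: "(real \<Rightarrow> real) \<Rightarrow> bool" where
  "smooth_real h \<longleftrightarrow> (\<forall>n x. (deriv ^^ n) h differentiable (at x))"

definition smooth_diffeo :: "(real \<Rightarrow> real) \<Rightarrow> bool" where
  "smooth_diffeo h \<longleftrightarrow> bij h \<and> smooth_real h \<and> smooth_real (inv h)"

definition odd_homeomorphism :: "(real \<Rightarrow> real) \<Rightarrow> bool" where
  "odd_homeomorphism h \<longleftrightarrow> (\<exists>k. homeomorphism UNIV UNIV h k) \<and> (\<forall>x. h (- x) = - h x)"

definition vab :: "(real \<Rightarrow> real) \<Rightarrow> 'a::euclidean_space \<Rightarrow> 'a \<Rightarrow> 'a \<Rightarrow> 'a" where
  "vab v a b c = (let e = (1 / norm (a - b)) *\<^sub>R (a - b)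
                  in c + (v (c \<bullet> e) - c \<bullet> e) *\<^sub>R e)"

definition fgeo :: "(real \<Rightarrow> real) \<Rightarrow> 'a::euclidean_space \<Rightarrow> 'a \<Rightarrow> real \<Rightarrow> 'a" where
  "fgeo v a b \<gamma> = (if a = b then a
     else inv (vab v a b) ((1 - \<gamma>) *\<^sub>R vab v a b a + \<gamma> *\<^sub>R vab v a b b))"

definition Geo :: "('a \<Rightarrow> 'a \<Rightarrow> real \<Rightarrow> 'a) \<Rightarrow> (real set \<times> (real \<Rightarrow> 'a)) set" where
  "Geo f = {(I, g). is_interval I \<and> open I \<and>
     (\<forall>\<tau>\<in>I. \<exists>\<alpha>\<in>I. \<exists>\<beta>\<in>I. \<alpha> < \<tau> \<and> \<tau> < \<beta> \<and>
        (\<forall>\<gamma>\<in>{0..1}. g ((1 - \<gamma>) * \<alpha> + \<gamma> * \<beta>) = f (g \<alpha>) (g \<beta>) \<gamma>))}"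

text \<open>r with v'' = r v' (v' never vanishes for a diffeomorphism).\<close>
definition rfun :: "(real \<Rightarrow> real) \<Rightarrow> real \<Rightarrow> real" where
  "rfun v x = deriv (deriv v) x / deriv v x"

definition sfun :: "(real \<Rightarrow> real) \<Rightarrow> 'a::euclidean_space \<Rightarrow> 'a \<Rightarrow> 'a" where
  "sfun v a b = (if b = 0 then 0 else (rfun v ((a \<bullet> b) / norm b) * norm b) *\<^sub>R b)"

end

theory Submission
  imports Defs
begin

lemma deriv_sym:
  fixes h :: "real \<Rightarrow> real"
  assumes d: "\<And>x. h differentiable at x" and s: "\<And>y. h (- y) = c * h y"
  shows "deriv h (- x) = - c * deriv h x"
proof -
  have D1: "DERIV h y :> deriv h y" for y using d DERIV_deriv_iff_real_differentiable by blast
  have "((\<lambda>y. h (- y)) has_real_derivative (deriv h (- x) * (-1))) (at x)"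
    by (rule DERIV_chain2[OF D1]) (auto intro!: derivative_eq_intros)
  moreover have "((\<lambda>y. c * h y) has_real_derivative (c * deriv h x)) (at x)"
    by (auto intro!: derivative_eq_intros D1)
  moreover have "(\<lambda>y. h (- y)) = (\<lambda>y. c * h y)" using s by auto
  ultimately have "deriv h (- x) * (-1) = c * deriv h x"
    using DERIV_unique by metis
  then show ?thesis by simp
qed

context
  fixes v :: "real \<Rightarrow> real"
  assumes oh: "odd_homeomorphism v" and sd: "smooth_diffeo v"
begin

lemma v_odd: "v (- x) = - v x" using oh unfolding odd_homeomorphism_def by blast

lemma v_bij: "bij v" using sd unfolding smooth_diffeo_def by blast

lemma v_diff: "v differentiable at x"
  using sd unfolding smooth_diffeo_def smooth_real_def by (metis funpow_0)

lemma v1_diff: "deriv v differentiable at x"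
  using sd unfolding smooth_diffeo_def smooth_real_def by (metis funpow_0 funpow_Suc_right o_apply One_nat_def funpow.simps(2))

lemma w_diff: "inv v differentiable at x"
  using sd unfolding smooth_diffeo_def smooth_real_def by (metis funpow_0)

lemma v1_even: "deriv v (- x) = deriv v x"
  using deriv_sym[of v "-1" x] v_diff v_odd by simp

lemma v2_odd: "deriv (deriv v) (- x) = - deriv (deriv v) x"
  using deriv_sym[of "deriv v" 1 x] v1_diff v1_even by simp

lemma r_odd: "rfun v (- x) = - rfun v x"
  unfolding rfun_def using v1_even v2_odd by simp

lemma vw: "v (inv v y) = y" using v_bij by (simp add: bij_is_surj surj_f_inv_f)
lemma wv: "inv v (v x) = x" using v_bij by (simp add: bij_is_inj)

lemma DV: "DERIV v x :> deriv v x" using v_diff DERIV_deriv_iff_real_differentiable by blast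
lemma DV1: "DERIV (deriv v) x :> deriv (deriv v) x" using v1_diff DERIV_deriv_iff_real_differentiable by blast
lemma DW0: "DERIV (inv v) x :> deriv (inv v) x" using w_diff DERIV_deriv_iff_real_differentiable by blast

lemma vw_prod: "deriv v (inv v y) * deriv (inv v) y = 1"
proof -
  have "((\<lambda>y. v (inv v y)) has_real_derivative (deriv v (inv v y) * deriv (inv v) y)) (at y)"
    by (rule DERIV_chain2[OF DV DW0])
  moreover have "((\<lambda>y. v (inv v y)) has_real_derivative 1) (at y)"
    by (simp add: vw)
  ultimately show ?thesis using DERIV_unique by blast
qed

lemma v1_nz: "deriv v x \<noteq> 0"
  using vw_prod[of "v x"] wv by force

lemma DW: "DERIV (inv v) y :> 1 / deriv v (inv v y)"
proof -
  have "deriv (inv v) y = 1 / deriv v (inv v y)"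
    using vw_prod[of y] v1_nz[of "inv v y"] by (simp add: field_simps)
  then show ?thesis using DW0[of y] by simp
qed

lemma sfun_hom: "sfun v a (c *\<^sub>R b) = c\<^sup>2 *\<^sub>R sfun v a b"
proof (cases "c = 0 \<or> b = 0")
  case True then show ?thesis by (auto simp: sfun_def)
next
  case False
  then have c: "c \<noteq> 0" and b: "b \<noteq> 0" by auto
  show ?thesis
  proof (cases "c > 0")
    case True
    have n: "norm (c *\<^sub>R b) = c * norm b" using True by simp
    have i: "a \<bullet> (c *\<^sub>R b) / norm (c *\<^sub>R b) = a \<bullet> b / norm b"
      using True n by simp
    have "sfun v a (c *\<^sub>R b) = (rfun v (a \<bullet> b / norm b) * (c * norm b)) *\<^sub>R (c *\<^sub>R b)"
      unfolding sfun_def using b c i n by simp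
    also have "\<dots> = c\<^sup>2 *\<^sub>R sfun v a b" unfolding sfun_def using b
      by (simp add: power2_eq_square)
    finally show ?thesis .
  next
    case False
    then have "c < 0" using c by simp
    then have n: "norm (c *\<^sub>R b) = (- c) * norm b" by simp
    have i: "a \<bullet> (c *\<^sub>R b) / norm (c *\<^sub>R b) = - (a \<bullet> b / norm b)"
      using c n by simp
    have "sfun v a (c *\<^sub>R b) = (rfun v (- (a \<bullet> b / norm b)) * ((- c) * norm b)) *\<^sub>R (c *\<^sub>R b)"
      unfolding sfun_def using b c i n by simp
    also have "\<dots> = c\<^sup>2 *\<^sub>R sfun v a b" unfolding sfun_def r_odd using b
      by (simp add: power2_eq_square)
    finally show ?thesis .
  qed
qed

lemma vab_eq: "vab v a b c = c + (v (c \<bullet> e) - c \<bullet> e) *\<^sub>R e"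
  if "e = (1 / norm (a - b)) *\<^sub>R (a - b)" for a b c e :: "'a::euclidean_space"
  using that unfolding vab_def Let_def by simp

lemma fgeo_form:
  fixes a b :: "'a::euclidean_space"
  assumes ab: "a \<noteq> b"
    and e_def: "e = (1 / norm (a - b)) *\<^sub>R (a - b)" and q_def: "q = a - (a \<bullet> e) *\<^sub>R e"
  shows "fgeo v a b \<gamma> = q + inv v ((1 - \<gamma>) * v (a \<bullet> e) + \<gamma> * v (b \<bullet> e)) *\<^sub>R e"
    and "q \<bullet> e = 0" and "e \<bullet> e = 1"
proof -
  define n where "n = norm (a - b)"
  have n0: "n > 0" using ab n_def by simp
  have ee: "e \<bullet> e = 1" unfolding e_def n_def[symmetric] using n0
    by (simp add: n_def power2_norm_eq_inner[symmetric] power2_eq_square)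
  then show "e \<bullet> e = 1" .
  show qe: "q \<bullet> e = 0" unfolding q_def using ee by (simp add: inner_diff_left)
  have ab_e: "a - b = n *\<^sub>R e" unfolding e_def n_def[symmetric] using n0 by simp
  have b_eq: "b = a - n *\<^sub>R e" using ab_e by (simp add: algebra_simps)
  have be: "b \<bullet> e = a \<bullet> e - n" using ee by (simp add: b_eq inner_diff_left)
  have bq: "b - (b \<bullet> e) *\<^sub>R e = q" unfolding q_def be using b_eq
    by (simp add: algebra_simps)
  let ?u = "vab v a b"
  have u: "?u c = c + (v (c \<bullet> e) - c \<bullet> e) *\<^sub>R e" for c by (rule vab_eq[OF e_def])
  have ue: "?u c \<bullet> e = v (c \<bullet> e)" for c using ee by (simp add: u inner_add_left)
  have inj: "inj ?u"
  proof (rule injI)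
    fix c1 c2 assume h: "?u c1 = ?u c2"
    then have "v (c1 \<bullet> e) = v (c2 \<bullet> e)" using ue by metis
    then have "c1 \<bullet> e = c2 \<bullet> e" using v_bij by (metis bij_is_inj injD)
    then show "c1 = c2" using h u by (metis add_right_imp_eq)
  qed
  have invu: "inv ?u y = y + (inv v (y \<bullet> e) - y \<bullet> e) *\<^sub>R e" for y
  proof (rule inv_f_eq[OF inj])
    have "(y + (inv v (y \<bullet> e) - y \<bullet> e) *\<^sub>R e) \<bullet> e = inv v (y \<bullet> e)"
      using ee by (simp add: inner_add_left algebra_simps)
    then show "?u (y + (inv v (y \<bullet> e) - y \<bullet> e) *\<^sub>R e) = y"
      by (simp add: u vw algebra_simps)
  qed
  define L where "L = (1 - \<gamma>) * v (a \<bullet> e) + \<gamma> * v (b \<bullet> e)"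
  define P where "P = (1 - \<gamma>) *\<^sub>R ?u a + \<gamma> *\<^sub>R ?u b"
  have PL: "P \<bullet> e = L" unfolding P_def L_def by (simp add: inner_add_left ue)
  have "P - L *\<^sub>R e = (1 - \<gamma>) *\<^sub>R (a - (a \<bullet> e) *\<^sub>R e) + \<gamma> *\<^sub>R (b - (b \<bullet> e) *\<^sub>R e)"
    unfolding P_def L_def u by (simp add: algebra_simps)
  also have "\<dots> = (1 - \<gamma>) *\<^sub>R q + \<gamma> *\<^sub>R q" by (simp only: bq q_def[symmetric])
  also have "\<dots> = q" by (simp add: algebra_simps)
  finally have Pq: "P - L *\<^sub>R e = q" .
  have "fgeo v a b \<gamma> = P + (inv v L - L) *\<^sub>R e"
    unfolding fgeo_def using ab invu PL P_def by simp
  also have "\<dots> = (P - L *\<^sub>R e) + inv v L *\<^sub>R e" by (simp add: algebra_simps)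
  finally show "fgeo v a b \<gamma> = q + inv v ((1 - \<gamma>) * v (a \<bullet> e) + \<gamma> * v (b \<bullet> e)) *\<^sub>R e"
    using Pq L_def by simp
qed

lemma seg_ode:
  fixes q e :: "'a::euclidean_space" and C K :: real
  assumes qe: "q \<bullet> e = 0" and ee: "e \<bullet> e = 1"
    and x_def: "x = (\<lambda>t. inv v (C + t * K))"
    and X1_def: "X1 = (\<lambda>t. K / deriv v (x t))"
    and X2_def: "X2 = (\<lambda>t. - rfun v (x t) * (X1 t)\<^sup>2)"
  shows "((\<lambda>t. q + x t *\<^sub>R e) has_vector_derivative X1 t *\<^sub>R e) (at t)"
    and "((\<lambda>t. X1 t *\<^sub>R e) has_vector_derivative X2 t *\<^sub>R e) (at t)"
    and "X2 t *\<^sub>R e + sfun v (q + x t *\<^sub>R e) (X1 t *\<^sub>R e) = 0"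
proof -
  have Dx: "(x has_real_derivative X1 t) (at t)" for t
  proof -
    have "((\<lambda>t. inv v (C + t * K)) has_real_derivative (1 / deriv v (inv v (C + t * K)) * K)) (at t)"
      by (rule DERIV_chain2[OF DW]) (auto intro!: derivative_eq_intros)
    then show ?thesis unfolding x_def X1_def by simp
  qed
  show "((\<lambda>t. q + x t *\<^sub>R e) has_vector_derivative X1 t *\<^sub>R e) (at t)"
    using has_vector_derivative_add[OF has_vector_derivative_const
        has_vector_derivative_scaleR[OF Dx has_vector_derivative_const]]
    by simp
  have Dv1: "((\<lambda>t. deriv v (x t)) has_real_derivative (deriv (deriv v) (x t) * X1 t)) (at t)"
    by (rule DERIV_chain2[OF DV1 Dx])
  have "((\<lambda>t. K / deriv v (x t)) has_real_derivative
      (- (K * (deriv (deriv v) (x t) * X1 t)) / (deriv v (x t) * deriv v (x t)))) (at t)"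
    using DERIV_divide[OF DERIV_const Dv1, of K] v1_nz[of "x t"] by simp
  moreover have "- (K * (deriv (deriv v) (x t) * X1 t)) / (deriv v (x t) * deriv v (x t)) = X2 t"
    unfolding X2_def X1_def rfun_def using v1_nz[of "x t"]
    by (simp add: field_simps power2_eq_square)
  ultimately have DX1: "(X1 has_real_derivative X2 t) (at t)" unfolding X1_def by simp
  show "((\<lambda>t. X1 t *\<^sub>R e) has_vector_derivative X2 t *\<^sub>R e) (at t)"
    using has_vector_derivative_scaleR[OF DX1 has_vector_derivative_const] by simp
  have ne: "norm e = 1" using ee by (simp add: norm_eq_sqrt_inner)
  have e0: "e \<noteq> 0" using ne by auto
  have "(q + x t *\<^sub>R e) \<bullet> e = x t" using qe ee by (simp add: inner_add_left)
  then have "sfun v (q + x t *\<^sub>R e) e = rfun v (x t) *\<^sub>R e"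
    unfolding sfun_def using e0 ne by simp
  then have "sfun v (q + x t *\<^sub>R e) (X1 t *\<^sub>R e) = ((X1 t)\<^sup>2 * rfun v (x t)) *\<^sub>R e"
    using sfun_hom[of "q + x t *\<^sub>R e" "X1 t" e] by simp
  then show "X2 t *\<^sub>R e + sfun v (q + x t *\<^sub>R e) (X1 t *\<^sub>R e) = 0"
    unfolding X2_def by (simp add: algebra_simps)
qed

lemma geo_local:
  fixes g :: "real \<Rightarrow> 'a::euclidean_space"
  assumes G: "(I, g) \<in> Geo (fgeo v)" and tau: "\<tau> \<in> I"
  shows "\<exists>G1 G2 S. open S \<and> \<tau> \<in> S \<and> (\<forall>t\<in>S. (g has_vector_derivative G1 t) (at t)
           \<and> (G1 has_vector_derivative G2 t) (at t) \<and> G2 t + sfun v (g t) (G1 t) = 0)"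
proof -
  obtain \<alpha> \<beta> where ab: "\<alpha> < \<tau>" "\<tau> < \<beta>"
    and seg: "\<And>\<gamma>. \<gamma> \<in> {0..1} \<Longrightarrow> g ((1 - \<gamma>) * \<alpha> + \<gamma> * \<beta>) = fgeo v (g \<alpha>) (g \<beta>) \<gamma>"
    using G tau unfolding Geo_def by blast
  define S where "S = {\<alpha><..<\<beta>}"
  have oS: "open S" and tS: "\<tau> \<in> S" using ab by (auto simp: S_def)
  have gS: "g t = fgeo v (g \<alpha>) (g \<beta>) ((t - \<alpha>) / (\<beta> - \<alpha>))" if "t \<in> S" for t
  proof -
    have "(t - \<alpha>) / (\<beta> - \<alpha>) \<in> {0..1}" using that ab by (auto simp: S_def field_simps)
    moreover have "(1 - (t - \<alpha>) / (\<beta> - \<alpha>)) * \<alpha> + ((t - \<alpha>) / (\<beta> - \<alpha>)) * \<beta> = t"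
    proof -
      have m: "(t - \<alpha>) / (\<beta> - \<alpha>) * (\<beta> - \<alpha>) = t - \<alpha>" using ab by simp
      have "(1 - (t - \<alpha>) / (\<beta> - \<alpha>)) * \<alpha> + ((t - \<alpha>) / (\<beta> - \<alpha>)) * \<beta>
            = \<alpha> + (t - \<alpha>) / (\<beta> - \<alpha>) * (\<beta> - \<alpha>)"
        using mult_commute_abs[of \<alpha>] by (simp only: algebra_simps)
      then show ?thesis using m by simp
    qed
    ultimately show ?thesis using seg by metis
  qed
  show ?thesis
  proof (cases "g \<alpha> = g \<beta>")
    case True
    have gc: "g t = g \<alpha>" if "t \<in> S" for t using gS[OF that] True by (simp add: fgeo_def)
    have "(g has_vector_derivative 0) (at t)" if "t \<in> S" for t
      by (rule has_vector_derivative_transform_within_open[OF has_vector_derivative_const oS that])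
        (simp add: gc)
    then show ?thesis using oS tS
      by (intro exI[of _ "\<lambda>_. 0"] exI[of _ S]) (auto simp: sfun_def)
  next
    case False
    define a b where "a = g \<alpha>" and "b = g \<beta>"
    have anb: "a \<noteq> b" using False a_def b_def by simp
    define e where "e = (1 / norm (a - b)) *\<^sub>R (a - b)"
    define q where "q = a - (a \<bullet> e) *\<^sub>R e"
    note F = fgeo_form[OF anb e_def q_def]
    define A B where "A = v (a \<bullet> e)" and "B = v (b \<bullet> e)"
    define K where "K = (B - A) / (\<beta> - \<alpha>)"
    define C where "C = A - \<alpha> * K"
    define x where "x = (\<lambda>t. inv v (C + t * K))"
    define X1 where "X1 = (\<lambda>t. K / deriv v (x t))"
    define X2 where "X2 = (\<lambda>t. - rfun v (x t) * (X1 t)\<^sup>2)"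
    note SO = seg_ode[OF F(2) F(3) x_def X1_def X2_def]
    have gh: "g t = q + x t *\<^sub>R e" if "t \<in> S" for t
    proof -
      have "(1 - (t - \<alpha>) / (\<beta> - \<alpha>)) * A + ((t - \<alpha>) / (\<beta> - \<alpha>)) * B = C + t * K"
        using ab unfolding C_def K_def by (simp add: field_simps)
      then show ?thesis using gS[OF that] F(1) unfolding x_def A_def B_def a_def b_def
        by simp
    qed
    have "(g has_vector_derivative X1 t *\<^sub>R e) (at t)" if "t \<in> S" for t
      by (rule has_vector_derivative_transform_within_open[OF SO(1) oS that]) (simp add: gh)
    moreover have "X2 t *\<^sub>R e + sfun v (g t) (X1 t *\<^sub>R e) = 0" if "t \<in> S" for t
      using SO(3)[of t] gh[OF that] by simp
    ultimately show ?thesis using oS tS SO(2)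
      by (intro exI[of _ "\<lambda>t. X1 t *\<^sub>R e"] exI[of _ "\<lambda>t. X2 t *\<^sub>R e"] exI[of _ S]) auto
  qed
qed

end

theorem mainTheorem9:
  fixes v :: "real \<Rightarrow> real"
  assumes "odd_homeomorphism v"
    and "smooth_diffeo v"
  shows "(\<forall>(a::'a::euclidean_space) b (c::real).
            sfun v a (c *\<^sub>R b) = c\<^sup>2 *\<^sub>R sfun v a b)
       \<and> (\<forall>(I, g) \<in> Geo (fgeo v :: 'a \<Rightarrow> 'a \<Rightarrow> real \<Rightarrow> 'a).
            \<exists>g' g''. \<forall>t\<in>I. (g has_vector_derivative g' t) (at t)
                       \<and> (g' has_vector_derivative g'' t) (at t)
                       \<and> g'' t + sfun v (g t) (g' t) = 0)"
proof (intro conjI allI ballI)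
  show "sfun v a (c *\<^sub>R b) = c\<^sup>2 *\<^sub>R sfun v a b" for a b :: 'a and c
    using sfun_hom[OF assms] .
next
  fix p assume p: "p \<in> Geo (fgeo v :: 'a \<Rightarrow> 'a \<Rightarrow> real \<Rightarrow> 'a)"
  obtain I g where pIg: "p = (I, g)" by (cases p)
  have G: "(I, g) \<in> Geo (fgeo v)" using p pIg by simp
  define g' where "g' = (\<lambda>t. vector_derivative g (at t))"
  define g'' where "g'' = (\<lambda>t. vector_derivative g' (at t))"
  have "(g has_vector_derivative g' t) (at t) \<and> (g' has_vector_derivative g'' t) (at t)
        \<and> g'' t + sfun v (g t) (g' t) = 0" if tI: "t \<in> I" for t
  proof -
    obtain G1 G2 S where oS: "open S" and tS: "t \<in> S"
      and H: "\<forall>s\<in>S. (g has_vector_derivative G1 s) (at s)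
           \<and> (G1 has_vector_derivative G2 s) (at s) \<and> G2 s + sfun v (g s) (G1 s) = 0"
      using geo_local[OF assms G tI] by blast
    have eq: "g' s = G1 s" if "s \<in> S" for s
      unfolding g'_def using H that vector_derivative_at by blast
    have d1: "(g has_vector_derivative g' t) (at t)" using H tS eq by auto
    have d2: "(g' has_vector_derivative G2 t) (at t)"
      by (rule has_vector_derivative_transform_within_open[OF _ oS tS]) (use H tS eq in auto)
    have "g'' t = G2 t" unfolding g''_def using d2 vector_derivative_at by blast
    then show ?thesis using d1 d2 H tS eq by auto
  qed
  then show "case p of (I, g) \<Rightarrow> \<exists>g' g''. \<forall>t\<in>I. (g has_vector_derivative g' t) (at t)
                       \<and> (g' has_vector_derivative g'' t) (at t)
                       \<and> g'' t + sfun v (g t) (g' t) = 0"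
    unfolding pIg by auto
qed

end
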